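(* Let $(X_k)_{k\ge 1}$ be nonnegative random variables with partial sums $S_0=0$, $S_k=X_1+\dots+X_k$, and let $T$ be a nonnegative DFR random variable, independent of $(X_k)_{k\ge1}$, with survival function $\overline F_T(t)=P(T>t)$. Fix a natural number $n\ge 1$ and assume there exists an $N_n$-distributional version $\{(Z^{\mathbf x}_{n+1},Z^{\mathbf x}_{n+2}):\mathbf x\in N_n\}$ of $(X_{n+1},X_{n+2})$ given $(X_1,\dots,X_n)$ such that, for every DFR survival function $\overline H$ on $[0,\infty)$ with $\overline H(0)=1$ and every $\mathbf x\in N_n$, $$\big(E[\overline H(Z^{\mathbf x}_{n+1})]\big)^2\le E[\overline H(Z^{\mathbf x}_{n+1}+Z^{\mathbf x}_{n+2})].$$ Then $$\big(E[\overline F_T(S_{n+1})]\big)^2\le E[\overline F_T(S_n)]\,E[\overline F_T(S_{n+2})].$$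
   Context: A survival function $\overline G$ (of a nonnegative random variable) is DFR (decreasing failure rate) if for every $z\ge 0$ the map $t\mapsto \overline G(z+t)/\overline G(t)$ is increasing (on $\{t:\overline G(t)>0\}$); a random variable is DFR if its survival function is. Regular conditional distributions: let $F_n$ be the law of $(X_1,\dots,X_n)$ and let $N_n\subseteq\mathbb R_+^n$ be a Borel set with $P((X_1,\dots,X_n)\in N_n)=1$. A family $\{\mu^{\mathbf x}:\mathbf x\in N_n\}$ of probability measures on $\mathbb R_+^m$, such that $\mathbf x\mapsto\mu^{\mathbf x}(B)$ is measurable for every Borel $B\subseteq\mathbb R_+^m$, is an $N_n$ regular conditional distribution of $(X_{n+1},\dots,X_{n+m})$ given $(X_1,\dots,X_n)$ if for all Borel $A\subseteq N_n$ and $B\subseteq\mathbb R_+^m$, $P((X_1,\dots,X_n)\in A,(X_{n+1},\dots,X_{n+m})\in B)=\int_A\mu^{\mathbf x}(B)\,dF_n(\mathbf x)$. An $N_n$-distributional version of $(X_{n+1},\dots,X_{n+m})$ given $(X_1,\dots,X_n)$ is a family of random vectors $\{(Z^{\mathbf x}_{n+1},\dots,Z^{\mathbf x}_{n+m}):\mathbf x\in N_n\}$ (not necessarily on a common probability space) such that $(Z^{\mathbf x}_{n+1},\dots,Z^{\mathbf x}_{n+m})$ has law $\mu^{\mathbf x}$ for each $\mathbf x$, where $\{\mu^{\mathbf x}\}$ is such a regular conditional distribution. *)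

theory Defs
  imports "HOL-Probability.Probability"
begin

definition survival_function :: "(real \<Rightarrow> real) \<Rightarrow> bool" where
  "survival_function G \<longleftrightarrow>
     (\<exists>N. real_distribution N \<and> measure N {..<0} = 0 \<and> (\<forall>t. G t = measure N {t<..}))"

definition DFR :: "(real \<Rightarrow> real) \<Rightarrow> bool" where
  "DFR G \<longleftrightarrow> (\<forall>z\<ge>0. \<forall>s t. 0 \<le> s \<and> s \<le> t \<and> G s > 0 \<and> G t > 0 \<longrightarrow>
                 G (z + s) / G s \<le> G (z + t) / G t)"

definition first_law :: "'a measure \<Rightarrow> (nat \<Rightarrow> 'a \<Rightarrow> real) \<Rightarrow> nat \<Rightarrow> (nat \<Rightarrow> real) measure" where
  "first_law M X n = distr M (Pi\<^sub>M {1..n} (\<lambda>_. borel)) (\<lambda>\<omega>. \<lambda>i\<in>{1..n}. X i \<omega>)"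

definition regular_cond_distr ::
  "'a measure \<Rightarrow> (nat \<Rightarrow> 'a \<Rightarrow> real) \<Rightarrow> nat \<Rightarrow> (nat \<Rightarrow> real) set
    \<Rightarrow> ((nat \<Rightarrow> real) \<Rightarrow> (real \<times> real) measure) \<Rightarrow> bool" where
  "regular_cond_distr M X n N \<mu> \<longleftrightarrow>
     N \<in> sets (Pi\<^sub>M {1..n} (\<lambda>_. borel)) \<and>
     N \<subseteq> {x. \<forall>i\<in>{1..n}. 0 \<le> x i} \<and>
     measure M {\<omega>\<in>space M. (\<lambda>i\<in>{1..n}. X i \<omega>) \<in> N} = 1 \<and>
     (\<forall>x\<in>N. prob_space (\<mu> x) \<and> sets (\<mu> x) = sets (borel :: (real \<times> real) measure) \<and>
              measure (\<mu> x) {z. 0 \<le> fst z \<and> 0 \<le> snd z} = 1) \<and>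
     (\<forall>B\<in>sets (borel :: (real \<times> real) measure). B \<subseteq> {z. 0 \<le> fst z \<and> 0 \<le> snd z} \<longrightarrow>
        (\<lambda>x. emeasure (\<mu> x) B) \<in> borel_measurable (restrict_space (Pi\<^sub>M {1..n} (\<lambda>_. borel)) N)) \<and>
     (\<forall>A\<in>sets (Pi\<^sub>M {1..n} (\<lambda>_. borel)). \<forall>B\<in>sets (borel :: (real \<times> real) measure).
        A \<subseteq> N \<longrightarrow> B \<subseteq> {z. 0 \<le> fst z \<and> 0 \<le> snd z} \<longrightarrow>
        emeasure M {\<omega>\<in>space M. (\<lambda>i\<in>{1..n}. X i \<omega>) \<in> A \<and> (X (n+1) \<omega>, X (n+2) \<omega>) \<in> B}
          = (\<integral>\<^sup>+ x. emeasure (\<mu> x) B * indicator A x \<partial>first_law M X n))"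

definition partial_sum :: "(nat \<Rightarrow> 'a \<Rightarrow> real) \<Rightarrow> nat \<Rightarrow> 'a \<Rightarrow> real" where
  "partial_sum X k \<omega> = (\<Sum>i\<in>{1..k}. X i \<omega>)"

end

theory Submission
  imports Defs
begin


lemma cs_lemma:
  fixes a b c :: "'b \<Rightarrow> real"
  assumes L: "finite_measure L"
    and [measurable]: "a \<in> borel_measurable L" "b \<in> borel_measurable L" "c \<in> borel_measurable L"
    and ab: "\<And>x. x \<in> space L \<Longrightarrow> 0 \<le> a x \<and> a x \<le> 1"
    and bb: "\<And>x. x \<in> space L \<Longrightarrow> 0 \<le> b x \<and> b x \<le> 1"
    and cb: "\<And>x. x \<in> space L \<Longrightarrow> 0 \<le> c x \<and> c x \<le> 1"
    and ineq: "\<And>x. x \<in> space L \<Longrightarrow> (b x)^2 \<le> a x * c x"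
  shows "(\<integral>x. b x \<partial>L)^2 \<le> (\<integral>x. a x \<partial>L) * (\<integral>x. c x \<partial>L)"
proof -
  interpret finite_measure L by fact
  have ia: "integrable L a" by (rule integrable_const_bound[where B=1]) (use ab in auto)
  have ib: "integrable L b" by (rule integrable_const_bound[where B=1]) (use bb in auto)
  have ic: "integrable L c" by (rule integrable_const_bound[where B=1]) (use cb in auto)
  define A where "A = (\<integral>x. a x \<partial>L)"
  define B where "B = (\<integral>x. b x \<partial>L)"
  define C where "C = (\<integral>x. c x \<partial>L)"
  have A0: "A \<ge> 0" unfolding A_def by (rule integral_nonneg_AE) (use ab in auto)
  have B0: "B \<ge> 0" unfolding B_def by (rule integral_nonneg_AE) (use bb in auto)
  have C0: "C \<ge> 0" unfolding C_def by (rule integral_nonneg_AE) (use cb in auto)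
  have key: "2 * B \<le> l * A + C / l" if l: "l > 0" for l
  proof -
    have pw: "2 * b x \<le> l * a x + c x / l" if x: "x \<in> space L" for x
    proof -
      have "(l * a x + c x / l)^2 - 4 * (a x * c x) = (l * a x - c x / l)^2"
        using l by (simp add: power2_eq_square field_simps)
      hence "(2 * b x)^2 \<le> (l * a x + c x / l)^2"
      proof -
        have "(2 * b x)^2 = 4 * (b x)^2" by (simp add: power2_eq_square)
        moreover have "0 \<le> (l * a x - c x / l)^2" by simp
        ultimately show ?thesis using ineq[OF x] \<open>_ = (l * a x - c x / l)^2\<close> by linarith
      qed
      moreover have "0 \<le> l * a x + c x / l" using ab[OF x] cb[OF x] l by simp
      ultimately show ?thesis by (rule power2_le_imp_le)
    qed
    have "(\<integral>x. 2 * b x \<partial>L) \<le> (\<integral>x. l * a x + c x / l \<partial>L)"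
      by (rule integral_mono) (use ia ib ic pw in auto)
    thus ?thesis using ia ib ic by (simp add: A_def B_def C_def)
  qed
  show ?thesis
  proof (cases "B = 0")
    case True thus ?thesis using A0 C0 by (simp add: A_def B_def C_def)
  next
    case False
    hence Bp: "B > 0" using B0 by simp
    show ?thesis
    proof (cases "A = 0")
      case True
      have "2 * B \<le> C / ((C + 1) / B)" using key[of "(C+1)/B"] Bp C0 True by simp
      also have "\<dots> = C * B / (C + 1)" using C0 Bp by (simp add: field_simps)
      also have "\<dots> < B" using C0 Bp by (simp add: field_simps)
      finally show ?thesis using Bp by simp
    next
      case False
      hence Ap: "A > 0" using A0 by simp
      have "2 * B \<le> (B / A) * A + C / (B / A)" using key[of "B/A"] Ap Bp by simp
      hence "2 * B \<le> B + C * A / B" using Ap Bp by (simp add: field_simps)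
      hence "B * B \<le> C * A" using Bp by (simp add: field_simps)
      thus ?thesis by (simp add: A_def B_def C_def power2_eq_square mult.commute)
    qed
  qed
qed



lemma F_basic:
  fixes T :: "'a \<Rightarrow> real"
  assumes P: "prob_space M" and T[measurable]: "T \<in> borel_measurable M"
  defines "F \<equiv> (\<lambda>t. measure M {\<omega>\<in>space M. T \<omega> > t})"
  shows F_anti: "\<And>s t. s \<le> t \<Longrightarrow> F t \<le> F s"
    and F_bnd: "\<And>t. 0 \<le> F t \<and> F t \<le> 1"
    and F_meas: "F \<in> borel_measurable borel"
proof -
  interpret prob_space M by fact
  show anti: "F t \<le> F s" if "s \<le> t" for s t
  proof -
    have "{\<omega>\<in>space M. T \<omega> > t} \<subseteq> {\<omega>\<in>space M. T \<omega> > s}" using that by auto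
    moreover have "{\<omega>\<in>space M. T \<omega> > s} \<in> events" by measurable
    ultimately show ?thesis unfolding F_def by (rule finite_measure_mono)
  qed
  show "0 \<le> F t \<and> F t \<le> 1" for t unfolding F_def by simp
  have "mono (\<lambda>t. - F t)" by (rule monoI) (use anti in simp)
  hence "(\<lambda>t. - F t) \<in> borel_measurable borel" by (rule borel_measurable_mono)
  hence "(\<lambda>t. - (- F t)) \<in> borel_measurable borel" by measurable
  thus "F \<in> borel_measurable borel" by simp
qed

lemma H_good:
  fixes T :: "'a \<Rightarrow> real"
  assumes P: "prob_space M" and T[measurable]: "T \<in> borel_measurable M"
    and F_def: "F = (\<lambda>t. measure M {\<omega>\<in>space M. T \<omega> > t})"
    and D: "DFR F"
    and s: "0 \<le> s" and Fs: "F s > 0"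
  shows "survival_function (\<lambda>t. if t < 0 then 1 else F (s + t) / F s) \<and>
         DFR (\<lambda>t. if t < 0 then 1 else F (s + t) / F s) \<and>
         (\<lambda>t. if t < 0 then 1 else F (s + t) / F s) 0 = 1"
proof (intro conjI)
  interpret prob_space M by fact
  have Fs': "F s > 0" using Fs by simp
  show "(\<lambda>t. if t < 0 then 1 else F (s + t) / F s) 0 = 1" using Fs' by simp
  show "DFR (\<lambda>t. if t < 0 then 1 else F (s + t) / F s)"
    unfolding DFR_def
  proof (intro allI impI)
    fix z a b :: real
    assume z: "0 \<le> z" and h: "0 \<le> a \<and> a \<le> b \<and> (if a < 0 then 1 else F (s + a) / F s) > 0 \<and>
       (if b < 0 then 1 else F (s + b) / F s) > 0"
    have pa: "F (s + a) > 0" using h Fs' by (auto simp: zero_less_divide_iff)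
    have pb: "F (s + b) > 0" using h Fs' by (auto simp: zero_less_divide_iff)
    have "F (z + (s + a)) / F (s + a) \<le> F (z + (s + b)) / F (s + b)"
    proof -
      have "0 \<le> s + a" "s + a \<le> s + b" using h s by auto
      thus ?thesis using D z pa pb unfolding DFR_def by blast
    qed
    thus "(if z + a < 0 then 1 else F (s + (z + a)) / F s) / (if a < 0 then 1 else F (s + a) / F s)
          \<le> (if z + b < 0 then 1 else F (s + (z + b)) / F s) / (if b < 0 then 1 else F (s + b) / F s)"
      using h z Fs' by (simp add: ac_simps)
  qed
  show "survival_function (\<lambda>t. if t < 0 then 1 else F (s + t) / F s)"
    unfolding survival_function_def
  proof (intro exI conjI allI)
    define \<nu> where "\<nu> = distr M borel T"
    have [simp]: "sets \<nu> = sets borel" "space \<nu> = UNIV" by (simp_all add: \<nu>_def)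
    have nu: "measure \<nu> A = measure M {\<omega>\<in>space M. T \<omega> \<in> A}" if "A \<in> sets borel" for A
      unfolding \<nu>_def using that by (subst measure_distr) (auto simp: vimage_def Int_def conj_commute)
    interpret nu: prob_space \<nu> unfolding \<nu>_def by (rule prob_space_distr) simp
    have nus: "measure \<nu> {s<..} = F s" by (subst nu) (auto simp: F_def)
    have e1: "emeasure \<nu> {s<..} \<noteq> 0" using Fs' nus by (simp add: nu.emeasure_eq_measure)
    have e2: "emeasure \<nu> {s<..} \<noteq> \<infinity>" by simp
    define U where "U = uniform_measure \<nu> {s<..}"
    interpret U: prob_space U unfolding U_def by (rule prob_space_uniform_measure[OF e1 e2])
    have [simp]: "sets U = sets borel" "space U = UNIV" by (simp_all add: U_def)
    have U: "measure U A = measure \<nu> ({s<..} \<inter> A) / F s" if "A \<in> sets borel" for A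
      unfolding U_def using that e1 e2 nus by simp
    define NN where "NN = distr U borel (\<lambda>u. u - s)"
    have "measurable U borel = measurable borel (borel::real measure)"
      by (rule measurable_cong_sets) simp_all
    hence mU: "(\<lambda>u. u - s) \<in> borel_measurable U" by simp
    show "real_distribution NN"
      unfolding NN_def real_distribution_def real_distribution_axioms_def
      using U.prob_space_distr[OF mU] by simp
    have NN: "measure NN A = measure U ((\<lambda>u. u - s) -` A)" if "A \<in> sets borel" for A
      unfolding NN_def using that mU by (subst measure_distr) auto
    show "measure NN {..<0} = 0"
    proof -
      have "(\<lambda>u. u - s) -` {..<0} = {..<s}" "{s<..} \<inter> {..<s} = {}" by auto
      thus ?thesis by (simp add: NN U)
    qed
    fix t :: real
    show "(if t < 0 then 1 else F (s + t) / F s) = measure NN {t<..}"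
    proof (cases "t < 0")
      case True
      have "(\<lambda>u. u - s) -` {t<..} = {s+t<..}" "{s<..} \<inter> {s+t<..} = {s<..}" using True by auto
      thus ?thesis using True Fs' nus by (simp add: NN U)
    next
      case False
      have "(\<lambda>u. u - s) -` {t<..} = {s+t<..}" "{s<..} \<inter> {s+t<..} = {s+t<..}" using False by auto
      moreover have "measure \<nu> {s+t<..} = F (s + t)" by (subst nu) (auto simp: F_def)
      ultimately show ?thesis using False by (simp add: NN U)
    qed
  qed
qed



lemma meas_K:
  fixes f :: "real \<times> real \<Rightarrow> 'b::topological_space"
  assumes "sets K = sets (borel :: (real \<times> real) measure)" "f \<in> borel_measurable (borel :: (real \<times> real) measure)"
  shows "f \<in> borel_measurable K"
proof -
  have "measurable K (borel::'b::topological_space measure) = measurable (borel :: (real \<times> real) measure) borel"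
    by (rule measurable_cong_sets) (simp_all add: assms)
  thus ?thesis using assms(2) by simp
qed

theorem proposition3p1:
  fixes M :: "'a measure" and X :: "nat \<Rightarrow> 'a \<Rightarrow> real" and T :: "'a \<Rightarrow> real" and n :: nat
  assumes "prob_space M"
    and "\<And>k. X k \<in> borel_measurable M"
    and "\<And>k \<omega>. k \<ge> 1 \<Longrightarrow> \<omega> \<in> space M \<Longrightarrow> 0 \<le> X k \<omega>"
    and "T \<in> borel_measurable M"
    and "\<And>\<omega>. \<omega> \<in> space M \<Longrightarrow> 0 \<le> T \<omega>"
    and "DFR (\<lambda>t. measure M {\<omega>\<in>space M. T \<omega> > t})"
    and "prob_space.indep_set M (sets (vimage_algebra (space M) T borel))
           (sets (vimage_algebra (space M) (\<lambda>\<omega>. \<lambda>k\<in>{1..}. X k \<omega>) (Pi\<^sub>M {1..} (\<lambda>_. borel))))"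
    and "n \<ge> 1"
    and "\<exists>N \<mu>. regular_cond_distr M X n N \<mu> \<and>
          (\<forall>H. survival_function H \<and> DFR H \<and> H 0 = 1 \<longrightarrow>
             (\<forall>x\<in>N. (\<integral>z. H (fst z) \<partial>\<mu> x)\<^sup>2 \<le> (\<integral>z. H (fst z + snd z) \<partial>\<mu> x)))"
  shows "(\<integral>\<omega>. measure M {\<omega>'\<in>space M. T \<omega>' > partial_sum X (n+1) \<omega>} \<partial>M)\<^sup>2
         \<le> (\<integral>\<omega>. measure M {\<omega>'\<in>space M. T \<omega>' > partial_sum X n \<omega>} \<partial>M) *
            (\<integral>\<omega>. measure M {\<omega>'\<in>space M. T \<omega>' > partial_sum X (n+2) \<omega>} \<partial>M)"
proof -
  interpret prob_space M by fact
  note [measurable] = assms(2) assms(4)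
  obtain N \<mu> where rc: "regular_cond_distr M X n N \<mu>" and hyp: "\<forall>H. survival_function H \<and> DFR H \<and> H 0 = 1 \<longrightarrow>
             (\<forall>x\<in>N. (\<integral>z. H (fst z) \<partial>\<mu> x)\<^sup>2 \<le> (\<integral>z. H (fst z + snd z) \<partial>\<mu> x))"
    using assms(9) by blast
  define P where "P = (Pi\<^sub>M {1..n} (\<lambda>_. borel) :: (nat \<Rightarrow> real) measure)"
  define Q2 where "Q2 = (borel :: (real \<times> real) measure)"
  define Qd where "Qd = {z::real\<times>real. 0 \<le> fst z \<and> 0 \<le> snd z}"
  define Xv where "Xv = (\<lambda>\<omega>. \<lambda>i\<in>{1..n}. X i \<omega>)"
  define Zv where "Zv = (\<lambda>\<omega>. (X (n+1) \<omega>, X (n+2) \<omega>))"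
  define L where "L = first_law M X n"
  define \<kappa> where "\<kappa> = (\<lambda>x. if x \<in> N then \<mu> x else return Q2 (0,0))"
  define s where "s = (\<lambda>x::nat\<Rightarrow>real. \<Sum>i\<in>{1..n}. x i)"
  define F where "F = (\<lambda>t. measure M {\<omega>\<in>space M. T \<omega> > t})"
  have F_anti: "\<And>a b. a \<le> b \<Longrightarrow> F b \<le> F a" and F_bnd: "\<And>t. 0 \<le> F t \<and> F t \<le> 1"
    and F_meas[measurable]: "F \<in> borel_measurable borel"
    using F_basic[OF assms(1) assms(4)] unfolding F_def by blast+
  have N_sets: "N \<in> sets P" and N_nonneg: "N \<subseteq> {x. \<forall>i\<in>{1..n}. 0 \<le> x i}"
    and N_full: "measure M {\<omega>\<in>space M. Xv \<omega> \<in> N} = 1"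
    and mu: "\<And>x. x\<in>N \<Longrightarrow> prob_space (\<mu> x) \<and> sets (\<mu> x) = sets Q2 \<and> measure (\<mu> x) Qd = 1"
    and mu_meas: "\<And>B. B\<in>sets Q2 \<Longrightarrow> B \<subseteq> Qd \<Longrightarrow> (\<lambda>x. emeasure (\<mu> x) B) \<in> borel_measurable (restrict_space P N)"
    and disint: "\<And>A B. A\<in>sets P \<Longrightarrow> B\<in>sets Q2 \<Longrightarrow> A \<subseteq> N \<Longrightarrow> B \<subseteq> Qd \<Longrightarrow>
        emeasure M {\<omega>\<in>space M. Xv \<omega> \<in> A \<and> Zv \<omega> \<in> B} = (\<integral>\<^sup>+ x. emeasure (\<mu> x) B * indicator A x \<partial>L)"
    using rc unfolding regular_cond_distr_def P_def Q2_def Qd_def Xv_def Zv_def L_def by auto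
  have Xv_meas[measurable]: "Xv \<in> measurable M P" unfolding Xv_def P_def by measurable
  have Zv_meas[measurable]: "Zv \<in> measurable M Q2" unfolding Zv_def Q2_def by measurable
  have Qd_sets[measurable]: "Qd \<in> sets Q2" unfolding Qd_def Q2_def
    by (intro borel_closed closed_Collect_conj closed_Collect_le) (auto intro: continuous_intros)
  have s_meas[measurable]: "s \<in> borel_measurable P" unfolding s_def P_def by measurable
  have spP: "space P \<noteq> {}"
  proof -
    have "(\<lambda>i\<in>{1..n}. 0::real) \<in> space P" unfolding P_def by (simp add: space_PiM)
    thus ?thesis by blast
  qed
  have spQ2[simp]: "space Q2 = UNIV" unfolding Q2_def by simp
  have L_eq: "L = distr M P Xv" unfolding L_def first_law_def P_def Xv_def by simp
  have sets_L[simp]: "sets L = sets P" and space_L[simp]: "space L = space P" unfolding L_eq by simp_all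
  interpret L: prob_space L unfolding L_eq by (rule prob_space_distr) simp
  have mu_restrict: "emeasure (\<mu> x) B = emeasure (\<mu> x) (B \<inter> Qd)" if x: "x \<in> N" and B: "B \<in> sets Q2" for x B
  proof -
    interpret mx: prob_space "\<mu> x" using mu[OF x] by blast
    have "AE z in \<mu> x. z \<in> Qd" by (rule mx.AE_prob_1) (use mu[OF x] in blast)
    moreover have "B \<in> sets (\<mu> x)" "B \<inter> Qd \<in> sets (\<mu> x)" using mu[OF x] B by auto
    ultimately show ?thesis by (intro emeasure_eq_AE) auto
  qed
  have \<kappa>_prob: "prob_space (\<kappa> x)" and \<kappa>_sets: "sets (\<kappa> x) = sets Q2"
    and \<kappa>_AE: "AE z in \<kappa> x. z \<in> Qd" for x
  proof -
    show "prob_space (\<kappa> x)" unfolding \<kappa>_def using mu by (auto intro: prob_space_return)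
    show "sets (\<kappa> x) = sets Q2" unfolding \<kappa>_def using mu by auto
    show "AE z in \<kappa> x. z \<in> Qd"
    proof (cases "x \<in> N")
      case True
      interpret mx: prob_space "\<mu> x" using mu[OF True] by blast
      have "AE z in \<mu> x. z \<in> Qd" by (rule mx.AE_prob_1) (use mu[OF True] in blast)
      moreover have "\<kappa> x = \<mu> x" using True by (simp add: \<kappa>_def)
      ultimately show ?thesis by metis
    next
      case False
      hence "\<kappa> x = return Q2 (0,0)" by (simp add: \<kappa>_def)
      moreover have "AE z in return Q2 (0,0). z \<in> Qd"
        by (subst AE_return) (auto simp: Qd_def[symmetric] Qd_sets, simp add: Qd_def)
      ultimately show ?thesis by metis
    qed
  qed
  have \<kappa>_meas[measurable]: "\<kappa> \<in> measurable P (subprob_algebra Q2)"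
  proof (rule measurable_subprob_algebra)
    fix x show "subprob_space (\<kappa> x)" using \<kappa>_prob[of x] by (simp add: prob_space_imp_subprob_space)
    show "sets (\<kappa> x) = sets Q2" by (rule \<kappa>_sets)
  next
    fix B assume B: "B \<in> sets Q2"
    have eq: "(\<lambda>x. emeasure (\<kappa> x) B) = (\<lambda>x. if x \<in> N then emeasure (\<mu> x) (B \<inter> Qd) else emeasure (return Q2 (0,0)) B)"
      by (auto simp: \<kappa>_def mu_restrict[OF _ B])
    have Nsp: "{x\<in>space P. x \<in> N} \<in> sets P" using N_sets by simp
    show "(\<lambda>x. emeasure (\<kappa> x) B) \<in> borel_measurable P"
      unfolding eq
      by (subst measurable_If_restrict_space_iff[OF Nsp]) (auto intro!: mu_meas simp: B)
  qed

  have \<kappa>_meas_L[measurable]: "\<kappa> \<in> measurable L (subprob_algebra Q2)"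
    using \<kappa>_meas by (simp add: measurable_cong_sets[OF sets_L refl])
  have Pair_meas: "Pair x \<in> measurable (\<kappa> x) (P \<Otimes>\<^sub>M Q2)" if x: "x \<in> space P" for x
  proof -
    have "measurable (\<kappa> x) (P \<Otimes>\<^sub>M Q2) = measurable Q2 (P \<Otimes>\<^sub>M Q2)"
      by (rule measurable_cong_sets) (simp_all add: \<kappa>_sets)
    thus ?thesis using measurable_Pair1'[OF x] by simp
  qed
  define \<kappa>' where "\<kappa>' = (\<lambda>x. distr (\<kappa> x) (P \<Otimes>\<^sub>M Q2) (Pair x))"
  have \<kappa>'_meas: "\<kappa>' \<in> measurable L (subprob_algebra (P \<Otimes>\<^sub>M Q2))"
  proof -
    have "(\<lambda>x. distr (\<kappa> x) (P \<Otimes>\<^sub>M Q2) (Pair x)) \<in> measurable P (subprob_algebra (P \<Otimes>\<^sub>M Q2))"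
      by (rule measurable_distr2[where f=Pair, OF _ \<kappa>_meas]) simp
    thus ?thesis unfolding \<kappa>'_def by (simp add: measurable_cong_sets[OF sets_L refl])
  qed
  define D where "D = distr M (P \<Otimes>\<^sub>M Q2) (\<lambda>\<omega>. (Xv \<omega>, Zv \<omega>))"
  have AE_N: "AE \<omega> in M. Xv \<omega> \<in> N"
  proof -
    have "AE \<omega> in M. \<omega> \<in> {\<omega>\<in>space M. Xv \<omega> \<in> N}" by (rule AE_prob_1) (use N_full in simp)
    thus ?thesis by auto
  qed
  have AE_LN: "AE x in L. x \<in> N"
    unfolding L_eq using AE_N N_sets by (subst AE_distr_iff) auto
  have D_eq: "D = L \<bind> \<kappa>'"
  proof (rule measure_eqI_generator_eq[OF Int_stable_pair_measure_generator[of P Q2],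
          where \<Omega>="space P \<times> space Q2" and A="\<lambda>_. space P \<times> space Q2"])
    show "{a \<times> b |a b. a \<in> sets P \<and> b \<in> sets Q2} \<subseteq> Pow (space P \<times> space Q2)"
      using sets.sets_into_space by fastforce
    show "sets D = sigma_sets (space P \<times> space Q2) {a \<times> b |a b. a \<in> sets P \<and> b \<in> sets Q2}"
      unfolding D_def by (simp add: sets_pair_measure)
    show "sets (L \<bind> \<kappa>') = sigma_sets (space P \<times> space Q2) {a \<times> b |a b. a \<in> sets P \<and> b \<in> sets Q2}"
      by (subst sets_bind[where N="P \<Otimes>\<^sub>M Q2"]) (auto simp: \<kappa>'_def spP sets_pair_measure)
    show "range (\<lambda>_. space P \<times> space Q2) \<subseteq> {a \<times> b |a b. a \<in> sets P \<and> b \<in> sets Q2}" by blast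
    show "(\<Union>i. space P \<times> space Q2) = space P \<times> space Q2" by simp
    show "emeasure D (space P \<times> space Q2) \<noteq> \<infinity>" for i :: nat
    proof -
      interpret Dp: prob_space D unfolding D_def by (rule prob_space_distr) simp
      show ?thesis by simp
    qed
  next
    fix E assume "E \<in> {a \<times> b |a b. a \<in> sets P \<and> b \<in> sets Q2}"
    then obtain a b where E: "E = a \<times> b" and a[measurable]: "a \<in> sets P" and b[measurable]: "b \<in> sets Q2" by blast
    have "emeasure D E = emeasure M {\<omega>\<in>space M. Xv \<omega> \<in> a \<and> Zv \<omega> \<in> b}"
      unfolding D_def E by (subst emeasure_distr) (auto intro!: arg_cong[where f="emeasure M"])
    also have "\<dots> = emeasure M {\<omega>\<in>space M. Xv \<omega> \<in> a \<inter> N \<and> Zv \<omega> \<in> b \<inter> Qd}"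
    proof (rule emeasure_eq_AE)
      have "\<forall>\<omega>\<in>space M. Zv \<omega> \<in> Qd" unfolding Zv_def Qd_def using assms(3) by auto
      thus "AE \<omega> in M. (\<omega> \<in> {\<omega>\<in>space M. Xv \<omega> \<in> a \<and> Zv \<omega> \<in> b}) =
                        (\<omega> \<in> {\<omega>\<in>space M. Xv \<omega> \<in> a \<inter> N \<and> Zv \<omega> \<in> b \<inter> Qd})"
        using AE_N by auto
      show "{\<omega>\<in>space M. Xv \<omega> \<in> a \<and> Zv \<omega> \<in> b} \<in> sets M" by measurable
      show "{\<omega>\<in>space M. Xv \<omega> \<in> a \<inter> N \<and> Zv \<omega> \<in> b \<inter> Qd} \<in> sets M"
        using N_sets by measurable
    qed
    also have "\<dots> = (\<integral>\<^sup>+ x. emeasure (\<mu> x) (b \<inter> Qd) * indicator (a \<inter> N) x \<partial>L)"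
      by (rule disint) (use N_sets in auto)
    also have "\<dots> = (\<integral>\<^sup>+ x. emeasure (\<kappa>' x) E \<partial>L)"
    proof (rule nn_integral_cong_AE)
      show "AE x in L. emeasure (\<mu> x) (b \<inter> Qd) * indicator (a \<inter> N) x = emeasure (\<kappa>' x) E"
        using AE_LN
      proof eventually_elim
        case (elim x)
        have xP: "x \<in> space P" using elim N_sets sets.sets_into_space by blast
        have "emeasure (\<kappa>' x) E = emeasure (\<kappa> x) (Pair x -` E \<inter> space (\<kappa> x))"
          unfolding \<kappa>'_def using Pair_meas[OF xP] E a b by (subst emeasure_distr) (auto intro: pair_measureI)
        also have "Pair x -` E \<inter> space (\<kappa> x) = (if x \<in> a then b else {})"
          using sets_eq_imp_space_eq[OF \<kappa>_sets[of x]] E by auto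
        finally show ?case using elim mu_restrict[OF elim b] by (simp add: \<kappa>_def indicator_def)
      qed
    qed
    also have "\<dots> = emeasure (L \<bind> \<kappa>') E"
      by (rule emeasure_bind[symmetric, OF _ \<kappa>'_meas]) (auto simp: spP E)
    finally show "emeasure D E = emeasure (L \<bind> \<kappa>') E" .
  qed

  have gen: "(\<integral>\<omega>. g (Xv \<omega>) (Zv \<omega>) \<partial>M) = (\<integral>x. (\<integral>z. g x z \<partial>\<kappa> x) \<partial>L) \<and>
      (\<lambda>x. \<integral>z. g x z \<partial>\<kappa> x) \<in> borel_measurable P \<and>
      (\<forall>x. 0 \<le> (\<integral>z. g x z \<partial>\<kappa> x) \<and> (\<integral>z. g x z \<partial>\<kappa> x) \<le> 1)"
    if gm: "(\<lambda>(x,z). g x z) \<in> borel_measurable (P \<Otimes>\<^sub>M Q2)" and gb: "\<And>x z. 0 \<le> g x z \<and> g x z \<le> 1"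
    for g :: "(nat \<Rightarrow> real) \<Rightarrow> real \<times> real \<Rightarrow> real"
  proof -
    have gm2: "(\<lambda>p. ennreal ((\<lambda>(x,z). g x z) p)) \<in> borel_measurable (P \<Otimes>\<^sub>M Q2)"
      using gm by measurable
    hence gm3: "(\<lambda>(x,z). ennreal (g x z)) \<in> borel_measurable (P \<Otimes>\<^sub>M Q2)"
      by (simp add: case_prod_beta')
    have gx: "g x \<in> borel_measurable (\<kappa> x)" if "x \<in> space P" for x
      by (rule meas_K[OF \<kappa>_sets[unfolded Q2_def]]) (use measurable_Pair2[OF gm that] in \<open>simp add: Q2_def\<close>)
    have gi: "integrable (\<kappa> x) (g x)" if "x \<in> space P" for x
    proof -
      interpret kx: prob_space "\<kappa> x" by (rule \<kappa>_prob)
      show ?thesis by (rule kx.integrable_const_bound[where B=1]) (use gb gx[OF that] in auto)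
    qed
    have hb: "0 \<le> (\<integral>z. g x z \<partial>\<kappa> x) \<and> (\<integral>z. g x z \<partial>\<kappa> x) \<le> 1" for x
    proof -
      interpret kx: prob_space "\<kappa> x" by (rule \<kappa>_prob)
      have "0 \<le> (\<integral>z. g x z \<partial>\<kappa> x)" by (rule integral_nonneg_AE) (use gb in auto)
      moreover have "(\<integral>z. g x z \<partial>\<kappa> x) \<le> 1"
      proof (cases "integrable (\<kappa> x) (g x)")
        case True
        have "(\<integral>z. g x z \<partial>\<kappa> x) \<le> (\<integral>z. 1 \<partial>\<kappa> x)"
          by (rule integral_mono) (use True gb in auto)
        thus ?thesis using kx.prob_space by simp
      next
        case False thus ?thesis by (simp add: not_integrable_integral_eq)
      qed
      ultimately show ?thesis ..
    qed
    have nn_inner: "(\<integral>\<^sup>+z. ennreal (g x z) \<partial>\<kappa> x) = ennreal (\<integral>z. g x z \<partial>\<kappa> x)" if "x \<in> space P" for x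
      by (rule nn_integral_eq_integral[OF gi[OF that]]) (use gb in auto)
    have hm: "(\<lambda>x. \<integral>z. g x z \<partial>\<kappa> x) \<in> borel_measurable P"
    proof -
      have "(\<lambda>x. \<integral>\<^sup>+z. ennreal (g x z) \<partial>\<kappa> x) \<in> borel_measurable P"
        by (rule nn_integral_measurable_subprob_algebra2[OF gm3 \<kappa>_meas])
      hence "(\<lambda>x. enn2real (\<integral>\<^sup>+z. ennreal (g x z) \<partial>\<kappa> x)) \<in> borel_measurable P" by measurable
      thus ?thesis by (rule measurable_cong[THEN iffD1, rotated]) (simp add: nn_inner hb)
    qed
    have hmL: "(\<lambda>x. \<integral>z. g x z \<partial>\<kappa> x) \<in> borel_measurable L"
      using hm by (simp add: measurable_cong_sets[OF sets_L refl])
    have hiL: "integrable L (\<lambda>x. \<integral>z. g x z \<partial>\<kappa> x)"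
      by (rule L.integrable_const_bound[where B=1]) (use hb hmL in auto)
    have Ym: "(\<lambda>\<omega>. g (Xv \<omega>) (Zv \<omega>)) \<in> borel_measurable M"
      using measurable_compose[OF measurable_Pair[OF Xv_meas Zv_meas] gm] by simp
    have YmE: "(\<lambda>\<omega>. ennreal (g (Xv \<omega>) (Zv \<omega>))) \<in> borel_measurable M" using Ym by measurable
    have Yi: "integrable M (\<lambda>\<omega>. g (Xv \<omega>) (Zv \<omega>))"
      by (rule integrable_const_bound[where B=1]) (use gb Ym in auto)
    have "ennreal (\<integral>\<omega>. g (Xv \<omega>) (Zv \<omega>) \<partial>M) = (\<integral>\<^sup>+\<omega>. ennreal (g (Xv \<omega>) (Zv \<omega>)) \<partial>M)"
      by (rule nn_integral_eq_integral[OF Yi, symmetric]) (use gb in auto)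
    also have "\<dots> = (\<integral>\<^sup>+y. ennreal ((\<lambda>(x,z). g x z) y) \<partial>D)"
      unfolding D_def by (subst nn_integral_distr) (use gm2 in auto)
    also have "\<dots> = (\<integral>\<^sup>+x. \<integral>\<^sup>+y. ennreal ((\<lambda>(x,z). g x z) y) \<partial>\<kappa>' x \<partial>L)"
      unfolding D_eq by (rule nn_integral_bind[OF gm2 \<kappa>'_meas])
    also have "\<dots> = (\<integral>\<^sup>+x. ennreal (\<integral>z. g x z \<partial>\<kappa> x) \<partial>L)"
    proof (rule nn_integral_cong)
      fix x assume "x \<in> space L"
      hence x: "x \<in> space P" by simp
      have "(\<integral>\<^sup>+y. ennreal ((\<lambda>(x,z). g x z) y) \<partial>\<kappa>' x) = (\<integral>\<^sup>+z. ennreal (g x z) \<partial>\<kappa> x)"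
        unfolding \<kappa>'_def by (subst nn_integral_distr[OF Pair_meas[OF x]]) (use gm2 in auto)
      thus "(\<integral>\<^sup>+y. ennreal ((\<lambda>(x,z). g x z) y) \<partial>\<kappa>' x) = ennreal (\<integral>z. g x z \<partial>\<kappa> x)"
        using nn_inner[OF x] by simp
    qed
    also have "\<dots> = ennreal (\<integral>x. (\<integral>z. g x z \<partial>\<kappa> x) \<partial>L)"
      by (rule nn_integral_eq_integral[OF hiL]) (use hb in auto)
    finally have "ennreal (\<integral>\<omega>. g (Xv \<omega>) (Zv \<omega>) \<partial>M) = ennreal (\<integral>x. (\<integral>z. g x z \<partial>\<kappa> x) \<partial>L)" .
    moreover have "0 \<le> (\<integral>\<omega>. g (Xv \<omega>) (Zv \<omega>) \<partial>M)" by (rule integral_nonneg_AE) (use gb in auto)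
    moreover have "0 \<le> (\<integral>x. (\<integral>z. g x z \<partial>\<kappa> x) \<partial>L)" by (rule integral_nonneg_AE) (use hb in auto)
    ultimately have "(\<integral>\<omega>. g (Xv \<omega>) (Zv \<omega>) \<partial>M) = (\<integral>x. (\<integral>z. g x z \<partial>\<kappa> x) \<partial>L)" by simp
    thus ?thesis using hm hb by blast
  qed

  define A where "A = (\<lambda>x. \<integral>z. F (s x) \<partial>\<kappa> x)"
  define B where "B = (\<lambda>x. \<integral>z. F (s x + fst z) \<partial>\<kappa> x)"
  define C where "C = (\<lambda>x. \<integral>z. F (s x + fst z + snd z) \<partial>\<kappa> x)"
  have Q2b: "Q2 = (borel \<Otimes>\<^sub>M borel :: (real \<times> real) measure)" by (simp add: Q2_def borel_prod)
  have m1: "(\<lambda>(x,z). F (s x)) \<in> borel_measurable (P \<Otimes>\<^sub>M Q2)" unfolding Q2b by measurable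
  have m2: "(\<lambda>(x,z). F (s x + fst z)) \<in> borel_measurable (P \<Otimes>\<^sub>M Q2)" unfolding Q2b by measurable
  have m3: "(\<lambda>(x,z). F (s x + fst z + snd z)) \<in> borel_measurable (P \<Otimes>\<^sub>M Q2)" unfolding Q2b by measurable
  note g1 = gen[of "\<lambda>x z. F (s x)", OF m1 F_bnd, folded A_def]
  note g2 = gen[of "\<lambda>x z. F (s x + fst z)", OF m2 F_bnd, folded B_def]
  note g3 = gen[of "\<lambda>x z. F (s x + fst z + snd z)", OF m3 F_bnd, folded C_def]
  have A_eq: "A x = F (s x)" for x
  proof -
    interpret kx: prob_space "\<kappa> x" by (rule \<kappa>_prob)
    show ?thesis unfolding A_def using kx.prob_space by simp
  qed
  have ps: "partial_sum X k \<omega> = s (Xv \<omega>) + (\<Sum>i\<in>{n<..k}. X i \<omega>)" if "n \<le> k" for k \<omega>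
  proof -
    have "s (Xv \<omega>) = (\<Sum>i\<in>{1..n}. X i \<omega>)" unfolding s_def Xv_def by simp
    moreover have "{1..k} = {1..n} \<union> {n<..k}" using that by auto
    moreover have "{1..n} \<inter> {n<..k} = {}" by auto
    ultimately show ?thesis unfolding partial_sum_def by (simp add: sum.union_disjoint)
  qed
  have ps0: "partial_sum X n \<omega> = s (Xv \<omega>)" for \<omega> using ps[of n \<omega>] by simp
  have ps1: "partial_sum X (n+1) \<omega> = s (Xv \<omega>) + fst (Zv \<omega>)" for \<omega>
  proof -
    have "{n<..n+1} = {n+1}" by auto
    thus ?thesis using ps[of "n+1" \<omega>] by (simp add: Zv_def)
  qed
  have ps2: "partial_sum X (n+2) \<omega> = s (Xv \<omega>) + fst (Zv \<omega>) + snd (Zv \<omega>)" for \<omega>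
  proof -
    have "{n<..n+2} = {n+1, n+2}" by auto
    thus ?thesis using ps[of "n+2" \<omega>] by (simp add: Zv_def)
  qed
  have E0: "(\<integral>\<omega>. measure M {\<omega>'\<in>space M. T \<omega>' > partial_sum X n \<omega>} \<partial>M) = (\<integral>x. A x \<partial>L)"
    using g1 by (simp add: ps0 F_def)
  have E1: "(\<integral>\<omega>. measure M {\<omega>'\<in>space M. T \<omega>' > partial_sum X (n+1) \<omega>} \<partial>M) = (\<integral>x. B x \<partial>L)"
    using g2 by (simp add: ps1[simplified] F_def)
  have E2: "(\<integral>\<omega>. measure M {\<omega>'\<in>space M. T \<omega>' > partial_sum X (n+2) \<omega>} \<partial>M) = (\<integral>x. C x \<partial>L)"
    using g3 by (simp add: ps2[simplified] F_def)

  have Fdfr: "DFR F" using assms(6) unfolding F_def .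
  have pw: "(B x)^2 \<le> A x * C x" if xP: "x \<in> space P" for x
  proof (cases "x \<in> N")
    case False
    hence kx: "\<kappa> x = return Q2 (0,0)" by (simp add: \<kappa>_def)
    have "B x = F (s x)" unfolding B_def kx
      by (subst integral_return) (simp_all add: Q2b space_pair_measure)
    moreover have "C x = F (s x)" unfolding C_def kx
      by (subst integral_return) (simp_all add: Q2b space_pair_measure)
    ultimately show ?thesis by (simp add: A_eq power2_eq_square)
  next
    case True
    have kx: "\<kappa> x = \<mu> x" using True by (simp add: \<kappa>_def)
    have sx: "0 \<le> s x" unfolding s_def using N_nonneg True by (auto intro!: sum_nonneg)
    have msets: "sets (\<mu> x) = sets Q2" using mu[OF True] by blast
    have AEQ: "AE z in \<mu> x. z \<in> Qd" using \<kappa>_AE[of x] kx by metis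
    have C0: "0 \<le> C x" unfolding C_def by (rule integral_nonneg_AE) (use F_bnd in auto)
    show ?thesis
    proof (cases "F (s x) = 0")
      case True
      have "B x = (\<integral>z. 0 \<partial>\<mu> x)" unfolding B_def kx
      proof (rule integral_cong_AE)
        show "(\<lambda>z. F (s x + fst z)) \<in> borel_measurable (\<mu> x)"
          by (rule meas_K[OF msets[unfolded Q2_def]]) (simp add: borel_prod[symmetric])
        show "(\<lambda>z. 0::real) \<in> borel_measurable (\<mu> x)" by simp
        show "AE z in \<mu> x. F (s x + fst z) = 0"
          using AEQ
        proof eventually_elim
          case (elim z)
          hence "F (s x + fst z) \<le> F (s x)" by (intro F_anti) (simp add: Qd_def)
          thus ?case using True F_bnd[of "s x + fst z"] by simp
        qed
      qed
      thus ?thesis using C0 True by (simp add: A_eq)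
    next
      case False
      hence Fp: "F (s x) > 0" using F_bnd[of "s x"] by simp
      define H where "H = (\<lambda>t. if t < 0 then 1 else F (s x + t) / F (s x))"
      have Hg: "survival_function H \<and> DFR H \<and> H 0 = 1"
        unfolding H_def by (rule H_good[OF assms(1) assms(4) F_def Fdfr sx Fp])
      have hy: "(\<integral>z. H (fst z) \<partial>\<mu> x)\<^sup>2 \<le> (\<integral>z. H (fst z + snd z) \<partial>\<mu> x)"
        using hyp Hg True by blast
      have H1: "(\<integral>z. H (fst z) \<partial>\<mu> x) = B x / F (s x)"
      proof -
        have "(\<integral>z. H (fst z) \<partial>\<mu> x) = (\<integral>z. F (s x + fst z) / F (s x) \<partial>\<mu> x)"
        proof (rule integral_cong_AE)
          show "(\<lambda>z. H (fst z)) \<in> borel_measurable (\<mu> x)"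
            by (rule meas_K[OF msets[unfolded Q2_def]]) (simp add: H_def borel_prod[symmetric])
          show "(\<lambda>z. F (s x + fst z) / F (s x)) \<in> borel_measurable (\<mu> x)"
            by (rule meas_K[OF msets[unfolded Q2_def]]) (simp add: borel_prod[symmetric])
          show "AE z in \<mu> x. H (fst z) = F (s x + fst z) / F (s x)"
            using AEQ by eventually_elim (simp add: H_def Qd_def)
        qed
        thus ?thesis unfolding B_def kx by simp
      qed
      have H2: "(\<integral>z. H (fst z + snd z) \<partial>\<mu> x) = C x / F (s x)"
      proof -
        have "(\<integral>z. H (fst z + snd z) \<partial>\<mu> x) = (\<integral>z. F (s x + fst z + snd z) / F (s x) \<partial>\<mu> x)"
        proof (rule integral_cong_AE)
          show "(\<lambda>z. H (fst z + snd z)) \<in> borel_measurable (\<mu> x)"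
            by (rule meas_K[OF msets[unfolded Q2_def]]) (simp add: H_def borel_prod[symmetric])
          show "(\<lambda>z. F (s x + fst z + snd z) / F (s x)) \<in> borel_measurable (\<mu> x)"
            by (rule meas_K[OF msets[unfolded Q2_def]]) (simp add: borel_prod[symmetric])
          show "AE z in \<mu> x. H (fst z + snd z) = F (s x + fst z + snd z) / F (s x)"
            using AEQ by eventually_elim (simp add: H_def Qd_def add.assoc)
        qed
        thus ?thesis unfolding C_def kx by simp
      qed
      have "(B x / F (s x))^2 \<le> C x / F (s x)" using hy H1 H2 by simp
      hence "(B x)^2 / (F (s x))^2 \<le> C x / F (s x)" by (simp add: power_divide)
      hence "(B x)^2 \<le> C x / F (s x) * (F (s x))^2" using Fp by (simp add: divide_le_eq)
      also have "\<dots> = F (s x) * C x" using Fp by (simp add: power2_eq_square)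
      finally show ?thesis by (simp add: A_eq)
    qed
  qed
  have "(\<integral>x. B x \<partial>L)^2 \<le> (\<integral>x. A x \<partial>L) * (\<integral>x. C x \<partial>L)"
  proof (rule cs_lemma)
    show "finite_measure L" by (rule L.finite_measure_axioms)
    show "A \<in> borel_measurable L" "B \<in> borel_measurable L" "C \<in> borel_measurable L"
      using g1 g2 g3 by (simp_all add: measurable_cong_sets[OF sets_L refl])
    show "\<And>x. x \<in> space L \<Longrightarrow> 0 \<le> A x \<and> A x \<le> 1" using g1 unfolding A_def by blast
    show "\<And>x. x \<in> space L \<Longrightarrow> 0 \<le> B x \<and> B x \<le> 1" using g2 unfolding B_def by blast
    show "\<And>x. x \<in> space L \<Longrightarrow> 0 \<le> C x \<and> C x \<le> 1" using g3 unfolding C_def by blast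
    show "\<And>x. x \<in> space L \<Longrightarrow> (B x)^2 \<le> A x * C x" using pw by simp
  qed
  thus ?thesis using E0 E1 E2 by simp
qed


end
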